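(* Let $k\ge 4$ and $n\ge 11k$. Then for every ordered $k$-tuple $S=(v_1,\dots,v_k)\in V(Q_n)^k$ of vertices of $Q_n$ (repetitions allowed), there exists an $S$-subdivided closed walk in $Q_n$.
   Context: $Q_n$ is the $n$-dimensional discrete binary cube: vertex set $\{0,1\}^n$, two vectors adjacent iff they differ in exactly one coordinate. For a graph $G$ and $S=(v_1,\dots,v_k)\in V(G)^k$ (repetitions permitted), with indices taken modulo $k$, an $S$-subdivided closed walk is a sequence $W=(v_1,P_1,v_2,P_2,\dots,v_k,P_k,v_1)$ such that each $P_i$ is a $v_i$–$v_{i+1}$ path in $G$, no two of the paths $P_i,P_j$ ($i\ne j$) share an internal vertex, $P_i$ is trivial if $v_i=v_{i+1}$, and $P_i$ has length at least $2$ if $v_i\ne v_{i+1}$. *)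

theory Defs
  imports Main
begin

definition cube_vertex :: "nat \<Rightarrow> bool list \<Rightarrow> bool" where
  "cube_vertex n x \<longleftrightarrow> length x = n"

definition cube_adj :: "nat \<Rightarrow> bool list \<Rightarrow> bool list \<Rightarrow> bool" where
  "cube_adj n x y \<longleftrightarrow> cube_vertex n x \<and> cube_vertex n y \<and>
     card {i. i < n \<and> x ! i \<noteq> y ! i} = 1"

definition cube_path :: "nat \<Rightarrow> bool list list \<Rightarrow> bool" where
  "cube_path n p \<longleftrightarrow> p \<noteq> [] \<and> distinct p \<and> (\<forall>x\<in>set p. cube_vertex n x) \<and>
     (\<forall>i. Suc i < length p \<longrightarrow> cube_adj n (p ! i) (p ! Suc i))"

definition path_len :: "'a list \<Rightarrow> nat" where
  "path_len p = length p - 1"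

definition internal_verts :: "'a list \<Rightarrow> 'a set" where
  "internal_verts p = set (butlast (tl p))"

text \<open>S-subdivided closed walk: S = (v_1,...,v_k) given as a list of length k,
  the paths P_1,...,P_k as a list of length k (0-indexed, indices mod k).\<close>
definition subdivided_closed_walk :: "nat \<Rightarrow> bool list list \<Rightarrow> bool list list list \<Rightarrow> bool" where
  "subdivided_closed_walk n S P \<longleftrightarrow>
     (let k = length S in
       length P = k \<and>
       (\<forall>i<k. cube_path n (P ! i) \<and> hd (P ! i) = S ! i \<and>
              last (P ! i) = S ! ((i + 1) mod k) \<and>
              (S ! i = S ! ((i + 1) mod k) \<longrightarrow> path_len (P ! i) = 0) \<and>
              (S ! i \<noteq> S ! ((i + 1) mod k) \<longrightarrow> path_len (P ! i) \<ge> 2)) \<and>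
       (\<forall>i<k. \<forall>j<k. i \<noteq> j \<longrightarrow> internal_verts (P ! i) \<inter> internal_verts (P ! j) = {}))"

end

theory Submission
  imports Defs
begin


definition flip :: "nat \<Rightarrow> bool list \<Rightarrow> bool list" where
  "flip c w = w[c := \<not> w!c]"

fun walk :: "bool list \<Rightarrow> nat list \<Rightarrow> bool list list" where
  "walk z [] = [z]"
| "walk z (c#cs) = z # walk (flip c z) cs"

lemma length_flip[simp]: "length (flip c w) = length w"
  by (simp add: flip_def)

lemma nth_flip: "j < length w \<Longrightarrow> flip c w ! j = (if j = c then \<not> w!j else w!j)"
  by (simp add: flip_def nth_list_update)

lemma nth_flip_neq: "j \<noteq> c \<Longrightarrow> flip c w ! j = w!j"
  by (simp add: flip_def)

lemma flip_flip: "c < length w \<Longrightarrow> flip c (flip c w) = w"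
  by (simp add: flip_def)

lemma walk_ne[simp]: "walk z cs \<noteq> []"
  by (cases cs) auto

lemma hd_walk[simp]: "hd (walk z cs) = z"
  by (cases cs) auto

lemma length_walk[simp]: "length (walk z cs) = Suc (length cs)"
  by (induction cs arbitrary: z) auto

lemma last_walk: "last (walk z cs) = fold flip cs z"
  by (induction cs arbitrary: z) auto

lemma walk_append: "walk z (xs @ ys) = walk z xs @ tl (walk (fold flip xs z) ys)"
proof (induction xs arbitrary: z)
  case Nil
  then show ?case by (cases ys) auto
next
  case (Cons x xs)
  then show ?case by simp
qed

lemma length_fold_flip[simp]: "length (fold flip cs z) = length z"
  by (induction cs arbitrary: z) auto

lemma walk_set: "w \<in> set (walk z cs) \<Longrightarrow> length w = length z \<and> (\<forall>j. j \<notin> set cs \<longrightarrow> w!j = z!j)"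
proof (induction cs arbitrary: z)
  case Nil
  then show ?case by simp
next
  case (Cons c cs)
  then show ?case by (auto simp: nth_flip_neq)
qed

lemma walk_tl:
  assumes d: "distinct cs" and b: "\<forall>c\<in>set cs. c < length z" and w: "w \<in> set (tl (walk z cs))"
  shows "\<exists>c\<in>set cs. w!c \<noteq> z!c"
proof (cases cs)
  case Nil
  then show ?thesis using w by simp
next
  case (Cons c cs')
  have "w \<in> set (walk (flip c z) cs')" using w Cons by simp
  from walk_set[OF this] have "w!c = flip c z ! c" using d Cons by auto
  also have "\<dots> = (\<not> z!c)" using b Cons by (simp add: nth_flip)
  finally show ?thesis using Cons by auto
qed

lemma walk_distinct: "distinct cs \<Longrightarrow> \<forall>c\<in>set cs. c < length z \<Longrightarrow> distinct (walk z cs)"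
proof (induction cs arbitrary: z)
  case Nil
  then show ?case by simp
next
  case (Cons c cs)
  have "z \<notin> set (walk (flip c z) cs)"
  proof
    assume "z \<in> set (walk (flip c z) cs)"
    from walk_set[OF this] have "z!c = flip c z ! c" using Cons.prems by auto
    then show False using Cons.prems by (simp add: nth_flip)
  qed
  then show ?case using Cons by simp
qed

lemma adj_flip: "length z = n \<Longrightarrow> c < n \<Longrightarrow> cube_adj n z (flip c z)"
proof -
  assume a: "length z = n" "c < n"
  have "{i. i < n \<and> z!i \<noteq> flip c z ! i} = {c}"
    using a by (auto simp: nth_flip split: if_splits)
  then show ?thesis using a by (simp add: cube_adj_def cube_vertex_def)
qed

lemma walk_adj: "length z = n \<Longrightarrow> \<forall>c\<in>set cs. c < n \<Longrightarrow>
   Suc j < length (walk z cs) \<Longrightarrow> cube_adj n (walk z cs ! j) (walk z cs ! Suc j)"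
proof (induction cs arbitrary: z j)
  case Nil
  then show ?case by simp
next
  case (Cons c cs)
  show ?case
  proof (cases j)
    case 0
    then show ?thesis using Cons.prems adj_flip by (cases cs) auto
  next
    case (Suc j')
    then show ?thesis using Cons by simp
  qed
qed

lemma walk_path: "length z = n \<Longrightarrow> \<forall>c\<in>set cs. c < n \<Longrightarrow> distinct cs \<Longrightarrow> cube_path n (walk z cs)"
  unfolding cube_path_def
  using walk_distinct[of cs z] walk_adj[of z n cs] walk_set[of _ z cs]
  by (auto simp: cube_vertex_def)

lemma fold_flip_nth: "distinct cs \<Longrightarrow> \<forall>c\<in>set cs. c < length z \<Longrightarrow> j < length z \<Longrightarrow>
   fold flip cs z ! j = (if j \<in> set cs then \<not> z!j else z!j)"
proof (induction cs arbitrary: z)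
  case Nil
  then show ?case by simp
next
  case (Cons c cs)
  then show ?case by (auto simp: nth_flip)
qed

lemma fold_flip_filter: "distinct L \<Longrightarrow> \<forall>c\<in>set L. c < length z \<Longrightarrow>
  fold flip (filter (\<lambda>c. z!c \<noteq> y c) L) z = map (\<lambda>j. if j \<in> set L then y j else z!j) [0..<length z]"
  by (rule nth_equalityI) (auto simp: fold_flip_nth)



lemma greedy:
  fixes g :: "nat \<Rightarrow> nat \<Rightarrow> 'a" and C :: "nat set" and F :: "'a set"
  assumes fin: "finite C" "finite F" and inj: "\<forall>t<m. inj_on (g t) C" and cd: "m + card F \<le> card C"
  shows "\<exists>f. \<forall>t<m. f t \<in> C \<and> g t (f t) \<notin> F \<and> (\<forall>t'<m. t' \<noteq> t \<longrightarrow> g t (f t) \<noteq> g t' (f t'))"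
  using cd inj
proof (induction m)
  case 0
  then show ?case by simp
next
  case (Suc m)
  then have "m + card F \<le> card C" "\<forall>t<m. inj_on (g t) C" by auto
  with Suc.IH obtain f where f: "\<forall>t<m. f t \<in> C \<and> g t (f t) \<notin> F \<and> (\<forall>t'<m. t' \<noteq> t \<longrightarrow> g t (f t) \<noteq> g t' (f t'))"
    by auto
  define Bad where "Bad = F \<union> (\<lambda>t. g t (f t)) ` {..<m}"
  have cB: "card Bad \<le> card F + m"
  proof -
    have "card Bad \<le> card F + card ((\<lambda>t. g t (f t)) ` {..<m})" unfolding Bad_def by (rule card_Un_le)
    also have "card ((\<lambda>t. g t (f t)) ` {..<m}) \<le> m"
      using card_image_le[of "{..<m}" "\<lambda>t. g t (f t)"] by simp
    finally show ?thesis by simp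
  qed
  define P where "P = {r\<in>C. g m r \<in> Bad}"
  have "g m ` P \<subseteq> Bad" unfolding P_def by auto
  moreover have "inj_on (g m) P" using inj_on_subset[of "g m" C P] Suc.prems(2) unfolding P_def by auto
  moreover have "finite Bad" unfolding Bad_def using fin by auto
  ultimately have "card P \<le> card Bad"
    using card_image[of "g m" P] card_mono[of Bad "g m ` P"] by simp
  then have "card P < card C" using cB Suc.prems by linarith
  then have "\<not> C \<subseteq> P" using fin card_mono[of P C] by (auto simp: P_def)
  then obtain r where r: "r \<in> C" "r \<notin> P" by auto
  then have r2: "g m r \<notin> Bad" unfolding P_def by auto
  define f' where "f' = f(m := r)"
  have "\<forall>t<Suc m. f' t \<in> C \<and> g t (f' t) \<notin> F \<and> (\<forall>t'<Suc m. t' \<noteq> t \<longrightarrow> g t (f' t) \<noteq> g t' (f' t'))"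
  proof (rule allI, rule impI, intro conjI)
    fix t assume t: "t < Suc m"
    show "f' t \<in> C" using f r t unfolding f'_def by (cases "t = m") auto
    show "g t (f' t) \<notin> F" using f r2 t unfolding f'_def Bad_def by (cases "t = m") auto
    show "\<forall>t'<Suc m. t' \<noteq> t \<longrightarrow> g t (f' t) \<noteq> g t' (f' t')"
    proof (intro allI impI)
      fix t' assume t': "t' < Suc m" "t' \<noteq> t"
      show "g t (f' t) \<noteq> g t' (f' t')"
      proof (cases "t = m")
        case True
        then have "t' < m" using t' by auto
        then show ?thesis using True r2 t' unfolding f'_def Bad_def by auto
      next
        case False
        then have tm: "t < m" using t by auto
        show ?thesis
        proof (cases "t' = m")
          case True
          then show ?thesis using tm r2 False unfolding f'_def Bad_def by force
        next
          case False
          then show ?thesis using tm t' f \<open>t \<noteq> m\<close> unfolding f'_def by auto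
        qed
      qed
    qed
  qed
  then show ?case by blast
qed



definition Wt :: "bool list list \<Rightarrow> nat \<Rightarrow> nat \<Rightarrow> bool list" where
  "Wt S k t = (if even t then S!(t div 2) else S!(Suc (t div 2) mod k))"

lemma in_set_tlD': "x \<in> set (tl xs) \<Longrightarrow> x \<in> set xs"
  by (cases xs) auto

lemma tl_append_ne: "xs \<noteq> [] \<Longrightarrow> tl (xs @ ys) = tl xs @ ys"
  by (cases xs) auto

locale cw =
  fixes n k :: nat and S :: "bool list list" and f :: "nat \<Rightarrow> nat"
  assumes k0: "0 < k" and lenS: "length S = k" and verts: "\<forall>v\<in>set S. length v = n"
  and fR: "\<forall>t<2*k. 2*k \<le> f t \<and> f t < n"
  and fF: "\<forall>t<2*k. drop (2*k) (flip (f t) (Wt S k t)) \<notin> drop (2*k) ` set S"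
  and fD: "\<forall>t<2*k. \<forall>t'<2*k. t' \<noteq> t \<longrightarrow> drop (2*k) (flip (f t) (Wt S k t)) \<noteq> drop (2*k) (flip (f t') (Wt S k t'))"
begin

definition "mu i c = (if c < k then \<not> (S!c)!c else c = k + i)"
definition "v i = S!i"
definition "v' i = S!(Suc i mod k)"
definition "a i = flip (f (2*i)) (v i)"
definition "a' i = flip (f (2*i+1)) (v' i)"
definition "D1 i = filter (\<lambda>c. a i!c \<noteq> mu i c) [k..<2*k]"
definition "m1 i = fold flip (D1 i) (a i)"
definition "D0 i = filter (\<lambda>c. m1 i!c \<noteq> mu i c) [0..<k]"
definition "b i = fold flip (D0 i) (m1 i)"
definition "DR i = filter (\<lambda>c. b i!c \<noteq> a' i!c) [2*k..<n]"
definition "c1 i = fold flip (DR i) (b i)"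
definition "D0' i = filter (\<lambda>c. c1 i!c \<noteq> v' i!c) [0..<k]"
definition "m2 i = fold flip (D0' i) (c1 i)"
definition "D1' i = filter (\<lambda>c. m2 i!c \<noteq> v' i!c) [k..<2*k]"
definition "d i = fold flip (D1' i) (m2 i)"
definition "xs i = D1 i @ D0 i @ DR i @ D0' i @ D1' i"
definition "path i = (if v i = v' i then [v i] else walk (v i) (f (2*i) # xs i @ [f (2*i+1)]))"

definition "RA w u = (\<forall>j. 2*k \<le> j \<and> j < n \<longrightarrow> w!j = u!j)"
definition "Reg i = {w. length w = n \<and> (
   (RA w (a i) \<and> ((\<forall>j<k. w!j = v i!j) \<or> (\<forall>j. k \<le> j \<and> j < 2*k \<longrightarrow> w!j = mu i j)))
 \<or> (\<forall>j<2*k. w!j = mu i j)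
 \<or> (RA w (a' i) \<and> ((\<forall>j. k \<le> j \<and> j < 2*k \<longrightarrow> w!j = mu i j) \<or> (\<forall>j<k. w!j = v' i!j))))}"

lemma n2k: "2*k < n"
proof -
  have "0 < 2*k" using k0 by simp
  then have "2*k \<le> f 0 \<and> f 0 < n" using fR by blast
  then show ?thesis by linarith
qed

lemma rb: "i < k \<Longrightarrow> 2*k \<le> f (2*i) \<and> f (2*i) < n \<and> 2*k \<le> f (2*i+1) \<and> f (2*i+1) < n"
  using fR by auto

lemma Wt_even: "Wt S k (2*i) = v i" by (simp add: Wt_def v_def)
lemma Wt_odd: "Wt S k (Suc (2*i)) = v' i" by (simp add: Wt_def v'_def)

lemma len_v[simp]: "i < k \<Longrightarrow> length (v i) = n"
  using verts lenS by (simp add: v_def)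
lemma len_v'[simp]: "i < k \<Longrightarrow> length (v' i) = n"
  using verts lenS k0 by (simp add: v'_def)
lemma len_a[simp]: "i < k \<Longrightarrow> length (a i) = n" by (simp add: a_def)
lemma len_a'[simp]: "i < k \<Longrightarrow> length (a' i) = n" by (simp add: a'_def)

lemma nth_a_low: "i < k \<Longrightarrow> j < 2*k \<Longrightarrow> a i ! j = v i ! j"
  using rb[of i] by (simp add: a_def nth_flip_neq)
lemma nth_a'_low: "i < k \<Longrightarrow> j < 2*k \<Longrightarrow> a' i ! j = v' i ! j"
  using rb[of i] by (simp add: a'_def nth_flip_neq)

lemma len_m1[simp]: "i < k \<Longrightarrow> length (m1 i) = n" by (simp add: m1_def)
lemma len_b[simp]: "i < k \<Longrightarrow> length (b i) = n" by (simp add: b_def)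
lemma len_c1[simp]: "i < k \<Longrightarrow> length (c1 i) = n" by (simp add: c1_def)
lemma len_m2[simp]: "i < k \<Longrightarrow> length (m2 i) = n" by (simp add: m2_def)
lemma len_d[simp]: "i < k \<Longrightarrow> length (d i) = n" by (simp add: d_def)

lemma nth_m1: "i < k \<Longrightarrow> j < n \<Longrightarrow> m1 i ! j = (if k \<le> j \<and> j < 2*k then mu i j else a i ! j)"
  unfolding m1_def D1_def using n2k
  by (subst fold_flip_filter) auto
lemma nth_b: "i < k \<Longrightarrow> j < n \<Longrightarrow> b i ! j = (if j < k then mu i j else m1 i ! j)"
  unfolding b_def D0_def using n2k
  by (subst fold_flip_filter) auto
lemma nth_c1: "i < k \<Longrightarrow> j < n \<Longrightarrow> c1 i ! j = (if 2*k \<le> j then a' i ! j else b i ! j)"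
  unfolding c1_def DR_def using n2k
  by (subst fold_flip_filter) auto
lemma nth_m2: "i < k \<Longrightarrow> j < n \<Longrightarrow> m2 i ! j = (if j < k then v' i ! j else c1 i ! j)"
  unfolding m2_def D0'_def using n2k
  by (subst fold_flip_filter) auto
lemma nth_d: "i < k \<Longrightarrow> j < n \<Longrightarrow> d i ! j = (if k \<le> j \<and> j < 2*k then v' i ! j else m2 i ! j)"
  unfolding d_def D1'_def using n2k
  by (subst fold_flip_filter) auto

lemma d_eq: "i < k \<Longrightarrow> d i = a' i"
  by (rule nth_equalityI) (auto simp: nth_d nth_m2 nth_c1 nth_a'_low)

lemma fold_xs: "i < k \<Longrightarrow> fold flip (xs i) (a i) = a' i"
  by (simp add: xs_def m1_def[symmetric] b_def[symmetric] c1_def[symmetric] m2_def[symmetric]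
       d_def[symmetric] d_eq)

lemma walk_xs: "walk (a i) (xs i) = walk (a i) (D1 i) @ tl (walk (m1 i) (D0 i)) @ tl (walk (b i) (DR i))
   @ tl (walk (c1 i) (D0' i)) @ tl (walk (m2 i) (D1' i))"
  unfolding xs_def
  by (simp add: walk_append m1_def[symmetric] b_def[symmetric] c1_def[symmetric] m2_def[symmetric] tl_append_ne)

lemma path_eq: "i < k \<Longrightarrow> v i \<noteq> v' i \<Longrightarrow> path i = v i # walk (a i) (xs i) @ [v' i]"
  unfolding path_def
  using rb[of i]
  by (simp add: walk_append a_def[symmetric] fold_xs flip_flip) (simp add: a'_def flip_flip)


lemma RA_drop: "length w = n \<Longrightarrow> length u = n \<Longrightarrow> RA w u \<Longrightarrow> drop (2*k) w = drop (2*k) u"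
  unfolding RA_def by (rule nth_equalityI) auto

lemma RA_trans: "RA w u \<Longrightarrow> RA w u' \<Longrightarrow> RA u u'"
  unfolding RA_def by auto

lemma lab_aa: "i < k \<Longrightarrow> j < k \<Longrightarrow> i \<noteq> j \<Longrightarrow> \<not> RA (a i) (a j)"
proof
  assume h: "i < k" "j < k" "i \<noteq> j" "RA (a i) (a j)"
  then have "drop (2*k) (a i) = drop (2*k) (a j)" by (intro RA_drop) auto
  moreover have "drop (2*k) (flip (f (2*i)) (Wt S k (2*i))) \<noteq> drop (2*k) (flip (f (2*j)) (Wt S k (2*j)))"
    using fD h by auto
  ultimately show False by (simp add: Wt_even a_def)
qed

lemma lab_a'a': "i < k \<Longrightarrow> j < k \<Longrightarrow> i \<noteq> j \<Longrightarrow> \<not> RA (a' i) (a' j)"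
proof
  assume h: "i < k" "j < k" "i \<noteq> j" "RA (a' i) (a' j)"
  then have "drop (2*k) (a' i) = drop (2*k) (a' j)" by (intro RA_drop) auto
  moreover have "drop (2*k) (flip (f (2*i+1)) (Wt S k (2*i+1))) \<noteq> drop (2*k) (flip (f (2*j+1)) (Wt S k (2*j+1)))"
    using fD h by auto
  ultimately show False by (simp add: Wt_odd a'_def)
qed

lemma lab_aa': "i < k \<Longrightarrow> j < k \<Longrightarrow> \<not> RA (a i) (a' j)"
proof
  assume h: "i < k" "j < k" "RA (a i) (a' j)"
  then have "drop (2*k) (a i) = drop (2*k) (a' j)" by (intro RA_drop) auto
  moreover have "2*j+1 \<noteq> 2*i" by presburger
  then have "drop (2*k) (flip (f (2*i)) (Wt S k (2*i))) \<noteq> drop (2*k) (flip (f (2*j+1)) (Wt S k (2*j+1)))"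
    using fD h by auto
  ultimately show False by (simp add: Wt_odd Wt_even a_def a'_def)
qed

lemma lab_Sa: "i < k \<Longrightarrow> l < k \<Longrightarrow> \<not> RA (S!l) (a i)"
proof
  assume h: "i < k" "l < k" "RA (S!l) (a i)"
  have lS: "length (S!l) = n" using verts lenS h by auto
  then have "drop (2*k) (S!l) = drop (2*k) (a i)" using h by (intro RA_drop) auto
  moreover have "drop (2*k) (flip (f (2*i)) (Wt S k (2*i))) \<notin> drop (2*k) ` set S"
    using fF h by auto
  ultimately show False using h lenS by (simp add: Wt_even a_def) (metis image_eqI nth_mem)
qed

lemma lab_Sa': "i < k \<Longrightarrow> l < k \<Longrightarrow> \<not> RA (S!l) (a' i)"
proof
  assume h: "i < k" "l < k" "RA (S!l) (a' i)"
  have lS: "length (S!l) = n" using verts lenS h by auto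
  then have "drop (2*k) (S!l) = drop (2*k) (a' i)" using h by (intro RA_drop) auto
  moreover have "drop (2*k) (flip (f (2*i+1)) (Wt S k (2*i+1))) \<notin> drop (2*k) ` set S"
    using fF h by auto
  ultimately show False using h lenS by (simp add: Wt_odd a'_def) (metis image_eqI nth_mem)
qed

lemma diag: "l < k \<Longrightarrow> (S!l)!l \<noteq> mu i l"
  by (simp add: mu_def)

lemma S_notin_Reg: "i < k \<Longrightarrow> l < k \<Longrightarrow> S!l \<notin> Reg i"
proof
  assume h: "i < k" "l < k" "S!l \<in> Reg i"
  have "l < 2*k" using h by simp
  then show False using h lab_Sa[of i l] lab_Sa'[of i l] diag[of l i] unfolding Reg_def by blast
qed

lemma RegE: "i < k \<Longrightarrow> w \<in> Reg i \<Longrightarrow>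
   (RA w (a i) \<and> w!i = (S!i)!i) \<or> (RA w (a i) \<and> w!(k+i)) \<or>
   ((\<forall>l<k. w!l = (\<not> (S!l)!l)) \<and> (\<forall>j<k. w!(k+j) = (j = i))) \<or>
   (RA w (a' i) \<and> w!(k+i)) \<or> (RA w (a' i) \<and> w!(Suc i mod k) = (S!(Suc i mod k))!(Suc i mod k))"
proof -
  assume h: "i < k" "w \<in> Reg i"
  have s: "Suc i mod k < k" using k0 by simp
  have m: "mu i (k+i)" by (simp add: mu_def)
  have e: "i < k" "k \<le> k + i \<and> k + i < 2*k" using h by auto
  consider (A) "RA w (a i) \<and> (\<forall>j<k. w!j = v i!j)" | (B) "RA w (a i) \<and> (\<forall>j. k \<le> j \<and> j < 2*k \<longrightarrow> w!j = mu i j)"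
    | (C) "\<forall>j<2*k. w!j = mu i j" | (D) "RA w (a' i) \<and> (\<forall>j. k \<le> j \<and> j < 2*k \<longrightarrow> w!j = mu i j)"
    | (E) "RA w (a' i) \<and> (\<forall>j<k. w!j = v' i!j)"
    using h(2) unfolding Reg_def by blast
  then show ?thesis
  proof cases
    case A then show ?thesis using e by (simp add: v_def)
  next
    case B then show ?thesis using e m by simp
  next
    case C
    have "\<forall>l<k. w!l = (\<not> (S!l)!l)" using C by (auto simp: mu_def)
    moreover have "\<forall>j<k. w!(k+j) = (j = i)" using C by (auto simp: mu_def)
    ultimately show ?thesis by blast
  next
    case D then show ?thesis using e m by simp
  next
    case E then show ?thesis using s by (simp add: v'_def)
  qed
qed

lemma Reg_disj: "i < k \<Longrightarrow> j < k \<Longrightarrow> i \<noteq> j \<Longrightarrow> Reg i \<inter> Reg j = {}"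
proof (rule ccontr)
  assume h: "i < k" "j < k" "i \<noteq> j" "Reg i \<inter> Reg j \<noteq> {}"
  then obtain w where w: "w \<in> Reg i" "w \<in> Reg j" by auto
  have si: "Suc i mod k < k" "Suc j mod k < k" using k0 by auto
  have l1: "\<not> (RA w (a i) \<and> RA w (a j))" using lab_aa[of i j] h RA_trans by blast
  have l2: "\<not> (RA w (a i) \<and> RA w (a' j))" using lab_aa'[of i j] h RA_trans by blast
  have l3: "\<not> (RA w (a' i) \<and> RA w (a j))" using lab_aa'[of j i] h RA_trans by blast
  have l4: "\<not> (RA w (a' i) \<and> RA w (a' j))" using lab_a'a'[of i j] h RA_trans by blast
  have Li: "w!j = (\<not> (S!j)!j) \<and> w!(Suc j mod k) = (\<not> (S!(Suc j mod k))!(Suc j mod k)) \<and> \<not> w!(k+j) \<and> w!(k+i)"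
    if H: "(\<forall>l<k. w!l = (\<not> (S!l)!l)) \<and> (\<forall>j'<k. w!(k+j') = (j' = i))"
  proof -
    have A: "\<forall>l<k. w!l = (\<not> (S!l)!l)" and B: "\<forall>j'<k. w!(k+j') = (j' = i)" using H by blast+
    show ?thesis using A[rule_format, OF h(2)] A[rule_format, OF si(2)] B[rule_format, OF h(2)]
      B[rule_format, OF h(1)] h(3) by simp
  qed
  have Lj: "w!i = (\<not> (S!i)!i) \<and> w!(Suc i mod k) = (\<not> (S!(Suc i mod k))!(Suc i mod k)) \<and> \<not> w!(k+i) \<and> w!(k+j)"
    if H: "(\<forall>l<k. w!l = (\<not> (S!l)!l)) \<and> (\<forall>j'<k. w!(k+j') = (j' = j))"
  proof -
    have A: "\<forall>l<k. w!l = (\<not> (S!l)!l)" and B: "\<forall>j'<k. w!(k+j') = (j' = j)" using H by blast+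
    show ?thesis using A[rule_format, OF h(1)] A[rule_format, OF si(1)] B[rule_format, OF h(1)]
      B[rule_format, OF h(2)] h(3) by simp
  qed
  from RegE[OF h(1) w(1)] RegE[OF h(2) w(2)] show False
    apply (elim disjE)
    using l1 l2 l3 l4 Li Lj by auto
qed


lemma dist_D: "distinct (D1 i)" "distinct (D0 i)" "distinct (DR i)" "distinct (D0' i)" "distinct (D1' i)"
  by (simp_all add: D1_def D0_def DR_def D0'_def D1'_def)

lemma set_D: "set (D1 i) \<subseteq> {k..<2*k}" "set (D0 i) \<subseteq> {0..<k}" "set (DR i) \<subseteq> {2*k..<n}"
   "set (D0' i) \<subseteq> {0..<k}" "set (D1' i) \<subseteq> {k..<2*k}"
  by (auto simp: D1_def D0_def DR_def D0'_def D1'_def)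

lemma bnd_D: "\<forall>c\<in>set (D1 i). c < n" "\<forall>c\<in>set (D0 i). c < n" "\<forall>c\<in>set (DR i). c < n"
   "\<forall>c\<in>set (D0' i). c < n" "\<forall>c\<in>set (D1' i). c < n"
  using set_D[of i] n2k by auto

lemma X1: assumes i: "i < k" and w: "w \<in> set (walk (a i) (D1 i))"
  shows "length w = n \<and> (\<forall>j<k. w!j = v i!j) \<and> RA w (a i)"
proof -
  from walk_set[OF w] have L: "length w = n" and A: "\<And>j. j \<notin> set (D1 i) \<Longrightarrow> w!j = a i!j" using i by auto
  have "\<forall>j<k. w!j = v i!j"
  proof (intro allI impI)
    fix j assume j: "j < k"
    then have "j \<notin> set (D1 i)" using set_D(1)[of i] by auto
    then show "w!j = v i!j" using A nth_a_low[OF i, of j] j by simp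
  qed
  moreover have "RA w (a i)" unfolding RA_def
  proof (intro allI impI)
    fix j assume j: "2*k \<le> j \<and> j < n"
    then have "j \<notin> set (D1 i)" using set_D(1)[of i] by auto
    then show "w!j = a i!j" using A by simp
  qed
  ultimately show ?thesis using L by blast
qed

lemma X2: assumes i: "i < k" and w: "w \<in> set (tl (walk (m1 i) (D0 i)))"
  shows "length w = n \<and> (\<forall>j. k \<le> j \<and> j < 2*k \<longrightarrow> w!j = mu i j) \<and> RA w (a i) \<and> (\<exists>j<k. w!j \<noteq> v i!j)"
proof -
  from walk_set[OF in_set_tlD'[OF w]] have L: "length w = n" and A: "\<And>j. j \<notin> set (D0 i) \<Longrightarrow> w!j = m1 i!j" using i by auto
  have "\<forall>j. k \<le> j \<and> j < 2*k \<longrightarrow> w!j = mu i j"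
  proof (intro allI impI)
    fix j assume j: "k \<le> j \<and> j < 2*k"
    then have "j \<notin> set (D0 i)" using set_D(2)[of i] by auto
    then show "w!j = mu i j" using A nth_m1[OF i, of j] j n2k by simp
  qed
  moreover have "RA w (a i)" unfolding RA_def
  proof (intro allI impI)
    fix j assume j: "2*k \<le> j \<and> j < n"
    then have "j \<notin> set (D0 i)" using set_D(2)[of i] by auto
    then show "w!j = a i!j" using A nth_m1[OF i, of j] j by simp
  qed
  moreover obtain c where c: "c \<in> set (D0 i)" "w!c \<noteq> m1 i!c" using walk_tl[OF dist_D(2) _ w] bnd_D(2)[of i] i by auto
  then have "c < k" using set_D(2)[of i] by auto
  then have "w!c \<noteq> v i!c" using c nth_m1[OF i, of c] nth_a_low[OF i, of c] n2k by auto
  ultimately show ?thesis using L \<open>c < k\<close> by blast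
qed

lemma X3: assumes i: "i < k" and w: "w \<in> set (tl (walk (b i) (DR i)))"
  shows "length w = n \<and> (\<forall>j<2*k. w!j = mu i j) \<and> (\<exists>j. 2*k \<le> j \<and> j < n \<and> w!j \<noteq> a i!j)"
proof -
  from walk_set[OF in_set_tlD'[OF w]] have L: "length w = n" and A: "\<And>j. j \<notin> set (DR i) \<Longrightarrow> w!j = b i!j" using i by auto
  have "\<forall>j<2*k. w!j = mu i j"
  proof (intro allI impI)
    fix j assume j: "j < 2*k"
    then have "j \<notin> set (DR i)" using set_D(3)[of i] by auto
    then show "w!j = mu i j" using A nth_b[OF i, of j] nth_m1[OF i, of j] j n2k by simp
  qed
  moreover obtain c where c: "c \<in> set (DR i)" "w!c \<noteq> b i!c" using walk_tl[OF dist_D(3) _ w] bnd_D(3)[of i] i by auto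
  then have "2*k \<le> c" "c < n" using set_D(3)[of i] by auto
  then have "w!c \<noteq> a i!c" using c nth_b[OF i, of c] nth_m1[OF i, of c] by auto
  ultimately show ?thesis using L \<open>2*k \<le> c\<close> \<open>c < n\<close> by blast
qed

lemma X4: assumes i: "i < k" and w: "w \<in> set (tl (walk (c1 i) (D0' i)))"
  shows "length w = n \<and> (\<forall>j. k \<le> j \<and> j < 2*k \<longrightarrow> w!j = mu i j) \<and> RA w (a' i) \<and> (\<exists>j<k. w!j \<noteq> mu i j)"
proof -
  from walk_set[OF in_set_tlD'[OF w]] have L: "length w = n" and A: "\<And>j. j \<notin> set (D0' i) \<Longrightarrow> w!j = c1 i!j" using i by auto
  have "\<forall>j. k \<le> j \<and> j < 2*k \<longrightarrow> w!j = mu i j"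
  proof (intro allI impI)
    fix j assume j: "k \<le> j \<and> j < 2*k"
    then have "j \<notin> set (D0' i)" using set_D(4)[of i] by auto
    then show "w!j = mu i j" using A nth_c1[OF i, of j] nth_b[OF i, of j] nth_m1[OF i, of j] j n2k by simp
  qed
  moreover have "RA w (a' i)" unfolding RA_def
  proof (intro allI impI)
    fix j assume j: "2*k \<le> j \<and> j < n"
    then have "j \<notin> set (D0' i)" using set_D(4)[of i] by auto
    then show "w!j = a' i!j" using A nth_c1[OF i, of j] j by simp
  qed
  moreover obtain c where c: "c \<in> set (D0' i)" "w!c \<noteq> c1 i!c" using walk_tl[OF dist_D(4) _ w] bnd_D(4)[of i] i by auto
  then have "c < k" using set_D(4)[of i] by auto
  then have "w!c \<noteq> mu i c" using c nth_c1[OF i, of c] nth_b[OF i, of c] n2k by auto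
  ultimately show ?thesis using L \<open>c < k\<close> by blast
qed

lemma X5: assumes i: "i < k" and w: "w \<in> set (tl (walk (m2 i) (D1' i)))"
  shows "length w = n \<and> (\<forall>j<k. w!j = v' i!j) \<and> RA w (a' i) \<and> (\<exists>j. k \<le> j \<and> j < 2*k \<and> w!j \<noteq> mu i j)"
proof -
  from walk_set[OF in_set_tlD'[OF w]] have L: "length w = n" and A: "\<And>j. j \<notin> set (D1' i) \<Longrightarrow> w!j = m2 i!j" using i by auto
  have "\<forall>j<k. w!j = v' i!j"
  proof (intro allI impI)
    fix j assume j: "j < k"
    then have "j \<notin> set (D1' i)" using set_D(5)[of i] by auto
    then show "w!j = v' i!j" using A nth_m2[OF i, of j] j n2k by simp
  qed
  moreover have "RA w (a' i)" unfolding RA_def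
  proof (intro allI impI)
    fix j assume j: "2*k \<le> j \<and> j < n"
    then have "j \<notin> set (D1' i)" using set_D(5)[of i] by auto
    then show "w!j = a' i!j" using A nth_m2[OF i, of j] nth_c1[OF i, of j] j by simp
  qed
  moreover obtain c where c: "c \<in> set (D1' i)" "w!c \<noteq> m2 i!c" using walk_tl[OF dist_D(5) _ w] bnd_D(5)[of i] i by auto
  then have "k \<le> c" "c < 2*k" using set_D(5)[of i] by auto
  then have "w!c \<noteq> mu i c" using c nth_m2[OF i, of c] nth_c1[OF i, of c] nth_b[OF i, of c] nth_m1[OF i, of c] n2k by auto
  ultimately show ?thesis using L \<open>k \<le> c\<close> \<open>c < 2*k\<close> by blast
qed


lemma walk_xs_Reg: assumes i: "i < k" shows "set (walk (a i) (xs i)) \<subseteq> Reg i"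
proof
  fix w assume w: "w \<in> set (walk (a i) (xs i))"
  then consider "w \<in> set (walk (a i) (D1 i))" | "w \<in> set (tl (walk (m1 i) (D0 i)))"
    | "w \<in> set (tl (walk (b i) (DR i)))" | "w \<in> set (tl (walk (c1 i) (D0' i)))"
    | "w \<in> set (tl (walk (m2 i) (D1' i)))"
    unfolding walk_xs by auto
  then show "w \<in> Reg i"
  proof cases
    case 1 then show ?thesis using X1[OF i] unfolding Reg_def by blast
  next
    case 2 then show ?thesis using X2[OF i] unfolding Reg_def by blast
  next
    case 3 then show ?thesis using X3[OF i] unfolding Reg_def by blast
  next
    case 4 then show ?thesis using X4[OF i] unfolding Reg_def by blast
  next
    case 5 then show ?thesis using X5[OF i] unfolding Reg_def by blast
  qed
qed

lemma walk_xs_distinct: assumes i: "i < k" shows "distinct (walk (a i) (xs i))"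
proof -
  let ?A = "walk (a i) (D1 i)" and ?B = "tl (walk (m1 i) (D0 i))" and ?C = "tl (walk (b i) (DR i))"
    and ?D = "tl (walk (c1 i) (D0' i))" and ?E = "tl (walk (m2 i) (D1' i))"
  have dA: "distinct ?A" using walk_distinct[OF dist_D(1)] bnd_D(1)[of i] i by auto
  have dB: "distinct ?B" using walk_distinct[OF dist_D(2)] bnd_D(2)[of i] i by (auto intro: distinct_tl)
  have dC: "distinct ?C" using walk_distinct[OF dist_D(3)] bnd_D(3)[of i] i by (auto intro: distinct_tl)
  have dD: "distinct ?D" using walk_distinct[OF dist_D(4)] bnd_D(4)[of i] i by (auto intro: distinct_tl)
  have dE: "distinct ?E" using walk_distinct[OF dist_D(5)] bnd_D(5)[of i] i by (auto intro: distinct_tl)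
  have lab: "\<not> RA (a i) (a' i)" using lab_aa'[OF i i] .
  have s: "Suc i mod k < k" using k0 by simp
  have dg: "v' i ! (Suc i mod k) \<noteq> mu i (Suc i mod k)" using s by (simp add: v'_def mu_def)
  have s2: "Suc i mod k < 2*k" using s by simp
  have AB: "set ?A \<inter> set ?B = {}"
  proof (rule ccontr)
    assume "set ?A \<inter> set ?B \<noteq> {}"
    then obtain w where w: "w \<in> set ?A" "w \<in> set ?B" by blast
    from X1[OF i w(1)] have P: "\<forall>j<k. w!j = v i!j" by blast
    from X2[OF i w(2)] obtain j where "j<k" "w!j \<noteq> v i!j" by blast
    then show False using P by blast
  qed
  have AC: "set ?A \<inter> set ?C = {}"
  proof (rule ccontr)
    assume "set ?A \<inter> set ?C \<noteq> {}"
    then obtain w where w: "w \<in> set ?A" "w \<in> set ?C" by blast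
    from X1[OF i w(1)] have P: "RA w (a i)" by blast
    from X3[OF i w(2)] obtain j where "2*k \<le> j" "j < n" "w!j \<noteq> a i!j" by blast
    then show False using P unfolding RA_def by blast
  qed
  have BC: "set ?B \<inter> set ?C = {}"
  proof (rule ccontr)
    assume "set ?B \<inter> set ?C \<noteq> {}"
    then obtain w where w: "w \<in> set ?B" "w \<in> set ?C" by blast
    from X2[OF i w(1)] have P: "RA w (a i)" by blast
    from X3[OF i w(2)] obtain j where "2*k \<le> j" "j < n" "w!j \<noteq> a i!j" by blast
    then show False using P unfolding RA_def by blast
  qed
  have AD: "set ?A \<inter> set ?D = {}"
  proof (rule ccontr)
    assume "set ?A \<inter> set ?D \<noteq> {}"
    then obtain w where w: "w \<in> set ?A" "w \<in> set ?D" by blast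
    from X1[OF i w(1)] X4[OF i w(2)] have "RA w (a i)" "RA w (a' i)" by blast+
    then show False using RA_trans lab by blast
  qed
  have AE: "set ?A \<inter> set ?E = {}"
  proof (rule ccontr)
    assume "set ?A \<inter> set ?E \<noteq> {}"
    then obtain w where w: "w \<in> set ?A" "w \<in> set ?E" by blast
    from X1[OF i w(1)] X5[OF i w(2)] have "RA w (a i)" "RA w (a' i)" by blast+
    then show False using RA_trans lab by blast
  qed
  have BD: "set ?B \<inter> set ?D = {}"
  proof (rule ccontr)
    assume "set ?B \<inter> set ?D \<noteq> {}"
    then obtain w where w: "w \<in> set ?B" "w \<in> set ?D" by blast
    from X2[OF i w(1)] X4[OF i w(2)] have "RA w (a i)" "RA w (a' i)" by blast+
    then show False using RA_trans lab by blast
  qed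
  have BE: "set ?B \<inter> set ?E = {}"
  proof (rule ccontr)
    assume "set ?B \<inter> set ?E \<noteq> {}"
    then obtain w where w: "w \<in> set ?B" "w \<in> set ?E" by blast
    from X2[OF i w(1)] X5[OF i w(2)] have "RA w (a i)" "RA w (a' i)" by blast+
    then show False using RA_trans lab by blast
  qed
  have CD: "set ?C \<inter> set ?D = {}"
  proof (rule ccontr)
    assume "set ?C \<inter> set ?D \<noteq> {}"
    then obtain w where w: "w \<in> set ?C" "w \<in> set ?D" by blast
    from X3[OF i w(1)] have P: "\<forall>j<2*k. w!j = mu i j" by blast
    from X4[OF i w(2)] obtain j where "j < k" "w!j \<noteq> mu i j" by blast
    then show False using P by simp
  qed
  have CE: "set ?C \<inter> set ?E = {}"
  proof (rule ccontr)
    assume "set ?C \<inter> set ?E \<noteq> {}"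
    then obtain w where w: "w \<in> set ?C" "w \<in> set ?E" by blast
    from X3[OF i w(1)] have P: "\<forall>j<2*k. w!j = mu i j" by blast
    from X5[OF i w(2)] have Q: "\<forall>j<k. w!j = v' i!j" by blast
    have "w!(Suc i mod k) = mu i (Suc i mod k)" using P s2 by blast
    moreover have "w!(Suc i mod k) = v' i!(Suc i mod k)" using Q s by blast
    ultimately show False using dg by simp
  qed
  have DE: "set ?D \<inter> set ?E = {}"
  proof (rule ccontr)
    assume "set ?D \<inter> set ?E \<noteq> {}"
    then obtain w where w: "w \<in> set ?D" "w \<in> set ?E" by blast
    from X4[OF i w(1)] have P: "\<forall>j. k \<le> j \<and> j < 2*k \<longrightarrow> w!j = mu i j" by blast
    from X5[OF i w(2)] obtain j where "k \<le> j" "j < 2*k" "w!j \<noteq> mu i j" by blast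
    then show False using P by simp
  qed
  show ?thesis unfolding walk_xs
    using dA dB dC dD dE AB AC AD AE BC BD BE CD CE DE by auto
qed

lemma path_ok: assumes i: "i < k"
  shows "cube_path n (path i) \<and> hd (path i) = v i \<and> last (path i) = v' i \<and>
    (v i = v' i \<longrightarrow> path_len (path i) = 0) \<and> (v i \<noteq> v' i \<longrightarrow> 2 \<le> path_len (path i)) \<and>
    internal_verts (path i) \<subseteq> Reg i"
proof (cases "v i = v' i")
  case True
  then show ?thesis using i by (simp add: path_def cube_path_def cube_vertex_def path_len_def internal_verts_def)
next
  case False
  have s: "Suc i mod k < k" using k0 by simp
  have pe: "path i = v i # walk (a i) (xs i) @ [v' i]" using path_eq[OF i False] .
  have pw: "path i = walk (v i) (f (2*i) # xs i @ [f (2*i+1)])" using False by (simp add: path_def)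
  have R: "set (walk (a i) (xs i)) \<subseteq> Reg i" using walk_xs_Reg[OF i] .
  have nv: "v i \<notin> Reg i" using S_notin_Reg[OF i i] by (simp add: v_def)
  have nv': "v' i \<notin> Reg i" using S_notin_Reg[OF i s] by (simp add: v'_def)
  have dist: "distinct (path i)" unfolding pe using walk_xs_distinct[OF i] R nv nv' False by auto
  have bnd: "\<forall>c\<in>set (f (2*i) # xs i @ [f (2*i+1)]). c < n"
    using rb[OF i] bnd_D[of i] by (auto simp: xs_def)
  have adj: "\<forall>j. Suc j < length (path i) \<longrightarrow> cube_adj n (path i ! j) (path i ! Suc j)"
    unfolding pw using walk_adj[OF len_v[OF i] bnd] by blast
  have lens: "\<forall>x\<in>set (path i). cube_vertex n x"
  proof
    fix x assume "x \<in> set (path i)"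
    then have "x \<in> set (walk (v i) (f (2*i) # xs i @ [f (2*i+1)]))" by (subst pw[symmetric])
    from walk_set[OF this] show "cube_vertex n x" using i by (simp add: cube_vertex_def)
  qed
  have cp: "cube_path n (path i)" unfolding cube_path_def using dist adj lens by (simp add: pe)
  have pl: "2 \<le> path_len (path i)" unfolding path_len_def pw by simp
  have iv: "internal_verts (path i) \<subseteq> Reg i" unfolding internal_verts_def pe using R by simp
  show ?thesis using cp pl iv False by (simp add: pe)
qed

end


theorem lemma3p9:
  fixes n k :: nat and S :: "bool list list"
  assumes "k \<ge> 4" and "n \<ge> 11 * k"
    and "length S = k" and "\<forall>v\<in>set S. cube_vertex n v"
  shows "\<exists>P. subdivided_closed_walk n S P"
proof -
  have verts: "\<forall>v\<in>set S. length v = n" using assms(4) by (simp add: cube_vertex_def)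
  have k0: "0 < k" using assms(1) by simp
  define C where "C = {2*k..<n}"
  define F where "F = drop (2*k) ` set S"
  define g where "g = (\<lambda>t r. drop (2*k) (flip r (Wt S k t)))"
  have Wmem: "Wt S k t \<in> set S" if t: "t < 2*k" for t
  proof (cases "even t")
    case True
    then have "t div 2 < k" using t by auto
    then show ?thesis using True assms(3) by (simp add: Wt_def)
  next
    case False
    have "Suc (t div 2) mod k < k" using k0 by simp
    then show ?thesis using False assms(3) by (simp add: Wt_def)
  qed
  have inj: "\<forall>t<2*k. inj_on (g t) C"
  proof (intro allI impI inj_onI)
    fix t r r' assume t: "t < 2*k" and r: "r \<in> C" "r' \<in> C" and e: "g t r = g t r'"
    let ?W = "Wt S k t"
    have lW: "length ?W = n" using Wmem[OF t] verts by auto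
    show "r = r'"
    proof (rule ccontr)
      assume ne: "r \<noteq> r'"
      have rr: "2*k \<le> r" "r < n" using r unfolding C_def by auto
      have "drop (2*k) (flip r ?W) ! (r - 2*k) = drop (2*k) (flip r' ?W) ! (r - 2*k)"
        using e unfolding g_def by simp
      then have "flip r ?W ! r = flip r' ?W ! r" using rr lW by simp
      then show False using ne rr lW by (simp add: nth_flip)
    qed
  qed
  have cF: "card F \<le> k" unfolding F_def using card_image_le[of "set S" "drop (2*k)"] card_length[of S] assms(3) by simp
  have cC: "card C = n - 2*k" unfolding C_def by simp
  have cd: "2*k + card F \<le> card C" using cF cC assms(2) by linarith
  obtain f where f: "\<forall>t<2*k. f t \<in> C \<and> g t (f t) \<notin> F \<and> (\<forall>t'<2*k. t' \<noteq> t \<longrightarrow> g t (f t) \<noteq> g t' (f t'))"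
    using greedy[of C F "2*k" g] inj cd unfolding C_def F_def by auto
  interpret cw n k S f
  proof
    show "0 < k" by (rule k0)
    show "length S = k" by (rule assms(3))
    show "\<forall>v\<in>set S. length v = n" by (rule verts)
    show "\<forall>t<2*k. 2*k \<le> f t \<and> f t < n" using f unfolding C_def by auto
    show "\<forall>t<2*k. drop (2*k) (flip (f t) (Wt S k t)) \<notin> drop (2*k) ` set S"
      using f unfolding g_def F_def by auto
    show "\<forall>t<2*k. \<forall>t'<2*k. t' \<noteq> t \<longrightarrow> drop (2*k) (flip (f t) (Wt S k t)) \<noteq> drop (2*k) (flip (f t') (Wt S k t'))"
      using f unfolding g_def by auto
  qed
  define P where "P = map path [0..<k]"
  have "subdivided_closed_walk n S P"
    unfolding subdivided_closed_walk_def Let_def assms(3)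
  proof (intro conjI allI impI)
    show "length P = k" by (simp add: P_def)
  next
    fix i assume i: "i < k"
    have Pi: "P ! i = path i" using i by (simp add: P_def)
    have vi: "S ! i = v i" by (simp add: v_def)
    have vi': "S ! ((i + 1) mod k) = v' i" by (simp add: v'_def)
    note po = path_ok[OF i]
    show "cube_path n (P ! i)" using po Pi by simp
    show "hd (P ! i) = S ! i" using po Pi vi by simp
    show "last (P ! i) = S ! ((i + 1) mod k)" using po Pi vi' by simp
    show "S ! i = S ! ((i + 1) mod k) \<Longrightarrow> path_len (P ! i) = 0" using po Pi vi vi' by simp
    show "S ! i \<noteq> S ! ((i + 1) mod k) \<Longrightarrow> 2 \<le> path_len (P ! i)" using po Pi vi vi' by simp
  next
    fix i j assume i: "i < k" and j: "j < k" and ij: "i \<noteq> j"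
    have "internal_verts (P ! i) \<subseteq> Reg i" using path_ok[OF i] i by (simp add: P_def)
    moreover have "internal_verts (P ! j) \<subseteq> Reg j" using path_ok[OF j] j by (simp add: P_def)
    ultimately show "internal_verts (P ! i) \<inter> internal_verts (P ! j) = {}"
      using Reg_disj[OF i j ij] by blast
  qed
  then show ?thesis by blast
qed

end
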